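(* Let $X_1,\dots,X_n$ be (possibly dependent) identically distributed component lifetimes with common distribution that of $X$, and let $\tau_1(\mathbf X)$ and $\tau_2(\mathbf X)$ be lifetimes of two coherent systems built on such components, with domination functions $h_1$ and $h_2$ respectively, i.e. $\bar F_{\tau_i(\mathbf X)}(x)=h_i(\bar F_X(x))$, $i=1,2$. Let $H_i(p)=p h_i'(p)/h_i(p)$, $p\in(0,1)$. Then $\tau_1(\mathbf X)\underset{c}{\prec}\tau_2(\mathbf X)$ (resp. $\tau_1(\mathbf X)\underset{c}{\succ}\tau_2(\mathbf X)$) if and only if $H_1(p)/H_2(p)$ is decreasing (resp. increasing) in $p\in(0,1)$.
   Context: All random variables are non-negative and absolutely continuous with support $[0,\infty)$. For a random variable $W$: density $f_W$, survival function $\bar F_W$, hazard rate $r_W=f_W/\bar F_W$. $U\underset{c}{\prec}V$ means $r_U(x)/r_V(x)$ is increasing in $x\ge0$; $U\underset{c}{\succ}V$ means $V\underset{c}{\prec}U$. The domination function $h:[0,1]\to[0,1]$ of a coherent system with identically distributed (possibly dependent) components is the function, depending on the structure and the survival copula, with system reliability $h(\bar F_X(x))$; it is increasing, continuous, $h(0)=0$, $h(1)=1$, assumed differentiable. "Increasing" means non-decreasing, "decreasing" means non-increasing. *)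

theory Defs
  imports "HOL-Analysis.Analysis"
begin

text \<open>A non-negative absolutely continuous lifetime with support [0,infinity),
  given by its survival function S and density f; the density is taken to be
  the (right) derivative of -S at every point x \<ge> 0.\<close>
definition lifetime :: "(real \<Rightarrow> real) \<Rightarrow> (real \<Rightarrow> real) \<Rightarrow> bool" where
  "lifetime S f \<longleftrightarrow>
     (\<forall>x\<le>0. S x = 1) \<and>
     (\<forall>x y. 0 \<le> x \<longrightarrow> x < y \<longrightarrow> S y < S x) \<and>
     (S \<longlongrightarrow> 0) at_top \<and>
     (\<forall>x<0. f x = 0) \<and>
     (\<forall>x\<ge>0. f x \<ge> 0 \<and> (S has_real_derivative - f x) (at x within {0..}))"

definition hazard :: "(real \<Rightarrow> real) \<Rightarrow> (real \<Rightarrow> real) \<Rightarrow> real \<Rightarrow> real" where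
  "hazard S f x = f x / S x"

definition c_prec :: "(real \<Rightarrow> real) \<Rightarrow> (real \<Rightarrow> real) \<Rightarrow> (real \<Rightarrow> real) \<Rightarrow> (real \<Rightarrow> real) \<Rightarrow> bool" where
  "c_prec SU fU SV fV \<longleftrightarrow> mono_on {0..} (\<lambda>x. hazard SU fU x / hazard SV fV x)"

definition domination_fun :: "(real \<Rightarrow> real) \<Rightarrow> (real \<Rightarrow> real) \<Rightarrow> bool" where
  "domination_fun h h' \<longleftrightarrow>
     mono_on {0..1} h \<and> continuous_on {0..1} h \<and> h 0 = 0 \<and> h 1 = 1 \<and>
     (\<forall>p\<in>{0..1}. (h has_real_derivative h' p) (at p within {0..1}))"

definition Hfun :: "(real \<Rightarrow> real) \<Rightarrow> (real \<Rightarrow> real) \<Rightarrow> real \<Rightarrow> real" where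
  "Hfun h h' p = p * h' p / h p"

end

theory Submission
  imports Defs
begin

lemma S_props:
  assumes X: "lifetime S f"
  shows "continuous_on {0..} S" "S 0 = 1"
    "\<And>x. 0 \<le> x \<Longrightarrow> 0 < S x" "\<And>x. 0 \<le> x \<Longrightarrow> S x \<le> 1" "\<And>x. 0 < x \<Longrightarrow> S x < 1"
    "\<And>p. 0 < p \<Longrightarrow> p < 1 \<Longrightarrow> \<exists>x>0. S x = p"
proof -
  have S1: "\<forall>x\<le>0. S x = 1" and dec: "\<forall>x y. 0 \<le> x \<longrightarrow> x < y \<longrightarrow> S y < S x"
    and lim: "(S \<longlongrightarrow> 0) at_top"
    and der: "\<forall>x\<ge>0. f x \<ge> 0 \<and> (S has_real_derivative - f x) (at x within {0..})"
    using X unfolding lifetime_def by auto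
  show cont: "continuous_on {0..} S"
    by (rule DERIV_continuous_on[where D="\<lambda>x. - f x"]) (use der in auto)
  show S0: "S 0 = 1" using S1 by auto
  show pos: "0 < S x" if "0 \<le> x" for x
  proof (rule ccontr)
    assume "\<not> 0 < S x"
    then have neg: "S (x+1) < 0" using dec that by (metis add.commute less_add_one linorder_not_less order_less_le_trans)
    have "\<forall>\<^sub>F y in at_top. S (x+1) < S y"
      using lim neg by (simp add: order_tendstoD(1))
    then obtain N where N: "\<And>y. y \<ge> N \<Longrightarrow> S (x+1) < S y"
      unfolding eventually_at_top_linorder by auto
    define y where "y = max N (x+2)"
    have "S (x+1) < S y" using N by (simp add: y_def)
    moreover have "S y < S (x+1)" using dec that by (auto simp: y_def)
    ultimately show False by simp
  qed
  show le1: "S x \<le> 1" if "0 \<le> x" for x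
    using dec[rule_format, of 0 x] S0 that by (cases "x = 0") auto
  show lt1: "S x < 1" if "0 < x" for x
    using dec S0 that by force
  show "\<exists>x>0. S x = p" if p: "0 < p" "p < 1" for p
  proof -
    have "\<forall>\<^sub>F y in at_top. S y < p" using lim p by (simp add: order_tendstoD(2))
    then obtain N where N: "\<And>y. y \<ge> N \<Longrightarrow> S y < p"
      unfolding eventually_at_top_linorder by auto
    have "\<exists>y. S y < p \<and> y > 0" by (rule exI[of _ "max N 1"]) (use N in auto)
    then obtain y where y: "S y < p" "y > 0" by auto
    have "continuous_on {0..y} S" using cont by (rule continuous_on_subset) auto
    then obtain x where x: "0 \<le> x" "x \<le> y" "S x = p"
      using IVT2'[of S y p 0] y p S0 by auto
    then have "x \<noteq> 0" using S0 p by auto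
    then show ?thesis using x by (intro exI[of _ x]) auto
  qed
qed

lemma h_props:
  assumes h: "domination_fun h h'" and hp: "\<forall>p\<in>{0<..<1}. h' p > 0"
  shows "\<And>p. 0 \<le> p \<Longrightarrow> p \<le> 1 \<Longrightarrow> 0 \<le> h p \<and> h p \<le> 1"
    "\<And>p. 0 < p \<Longrightarrow> p \<le> 1 \<Longrightarrow> 0 < h p"
    "0 \<le> h' 1"
proof -
  have mono: "mono_on {0..1} h" and h0: "h 0 = 0" and h1: "h 1 = 1"
    and der: "\<forall>p\<in>{0..1}. (h has_real_derivative h' p) (at p within {0..1})"
    using h unfolding domination_fun_def by auto
  show b: "0 \<le> h p \<and> h p \<le> 1" if "0 \<le> p" "p \<le> 1" for p
    using mono_onD[OF mono, of 0 p] mono_onD[OF mono, of p 1] that h0 h1 by auto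
  show "0 < h p" if p: "0 < p" "p \<le> 1" for p
  proof (cases "p = 1")
    case True then show ?thesis using h1 by simp
  next
    case False
    with p have pp: "p \<in> {0<..<1}" by auto
    then have "h' p > 0" using hp by auto
    then obtain d where d: "d > 0" "\<forall>t>0. p - t \<in> {0..1} \<longrightarrow> t < d \<longrightarrow> h (p - t) < h p"
      using has_real_derivative_pos_inc_left[of h "h' p" p "{0..1}"] der pp by auto
    define t where "t = min (d/2) p"
    have "t > 0" "t < d" "p - t \<in> {0..1}" using d p pp by (auto simp: t_def)
    then have "h (p - t) < h p" using d by auto
    moreover have "0 \<le> h (p - t)" using b \<open>p - t \<in> {0..1}\<close> by auto
    ultimately show ?thesis by linarith
  qed
  show "0 \<le> h' 1"
  proof (rule ccontr)
    assume "\<not> 0 \<le> h' 1"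
    then obtain d where d: "d > 0" "\<forall>t>0. 1 - t \<in> {0..1} \<longrightarrow> t < d \<longrightarrow> h (1 - t) > h 1"
      using has_real_derivative_neg_dec_left[of h "h' 1" 1 "{0..1}"] der by auto
    define t where "t = min (d/2) 1"
    have "t > 0" "t < d" "1 - t \<in> {0..1}" using d by (auto simp: t_def)
    then have "h (1 - t) > h 1" using d by auto
    moreover have "h (1 - t) \<le> 1" using b \<open>1 - t \<in> {0..1}\<close> by auto
    ultimately show False using h1 by linarith
  qed
qed

lemma fT_eq:
  assumes X: "lifetime S f" and h: "domination_fun h h'"
    and T: "lifetime (\<lambda>x. h (S x)) fT" and x: "0 \<le> x"
  shows "fT x = h' (S x) * f x"
proof -
  have derS: "(S has_real_derivative - f x) (at x within {0..})"
    using X x unfolding lifetime_def by auto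
  have derh: "\<forall>p\<in>{0..1}. (h has_real_derivative h' p) (at p within {0..1})"
    using h unfolding domination_fun_def by auto
  have img: "S ` {0..} \<subseteq> {0..1}"
    using S_props(3,4)[OF X] by (force intro: less_imp_le)
  have Sx: "S x \<in> {0..1}" using img x by auto
  have "(h has_real_derivative h' (S x)) (at (S x) within S ` {0..})"
    using has_field_derivative_subset[OF derh[rule_format, OF Sx] img] .
  from DERIV_image_chain[OF this derS]
  have d1: "((\<lambda>y. h (S y)) has_real_derivative h' (S x) * - f x) (at x within {0..})"
    by (simp add: o_def)
  have d2: "((\<lambda>y. h (S y)) has_real_derivative - fT x) (at x within {0..})"
    using T x unfolding lifetime_def by auto
  have nb: "at x within {0..} \<noteq> bot"
  proof -
    have "x islimpt {x<..<x+1}" by (rule islimpt_greaterThanLessThan1) simp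
    then have "x islimpt {0..}" by (rule islimpt_subset) (use x in auto)
    then show ?thesis using trivial_limit_within by blast
  qed
  have "h' (S x) * - f x = - fT x"
    using vector_derivative_unique_within[OF nb d1[unfolded has_real_derivative_iff_has_vector_derivative]
        d2[unfolded has_real_derivative_iff_has_vector_derivative]] .
  then show ?thesis by simp
qed

lemma boundary:
  assumes h1: "domination_fun h1 h1'" and h2: "domination_fun h2 h2'"
    and p1: "\<forall>p\<in>{0<..<1}. h1' p > 0" and p2: "\<forall>p\<in>{0<..<1}. h2' p > 0"
    and q: "0 < q" "q < 1" and c: "0 \<le> c"
    and G: "\<And>p. q < p \<Longrightarrow> p < 1 \<Longrightarrow> Hfun h1 h1' p / Hfun h2 h2' p \<le> c"
  shows "h1' 1 \<le> c * h2' 1"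
proof -
  have c1: "continuous_on {0..1} h1" and c2: "continuous_on {0..1} h2"
    and m1: "mono_on {0..1} h1" and m2: "mono_on {0..1} h2"
    and one1: "h1 1 = 1" and one2: "h2 1 = 1"
    and d1: "\<forall>p\<in>{0..1}. (h1 has_real_derivative h1' p) (at p within {0..1})"
    and d2: "\<forall>p\<in>{0..1}. (h2 has_real_derivative h2' p) (at p within {0..1})"
    using h1 h2 unfolding domination_fun_def by auto
  have sub01: "{0<..<1::real} \<subseteq> {0..1}" by auto
  have D1: "(h1 has_real_derivative h1' z) (at z)" if "0 < z" "z < 1" for z
  proof -
    have "(h1 has_real_derivative h1' z) (at z within {0<..<1})"
      by (rule has_field_derivative_subset[OF d1[rule_format] sub01]) (use that in auto)
    then show ?thesis using that at_within_open[of z "{0<..<1}"] by simp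
  qed
  have D2: "(h2 has_real_derivative h2' z) (at z)" if "0 < z" "z < 1" for z
  proof -
    have "(h2 has_real_derivative h2' z) (at z within {0<..<1})"
      by (rule has_field_derivative_subset[OF d2[rule_format] sub01]) (use that in auto)
    then show ?thesis using that at_within_open[of z "{0<..<1}"] by simp
  qed
  have key: "(1 - h1 p) * h2 p \<le> c * (1 - h2 p)" if p: "q < p" "p < 1" for p
  proof -
    define \<phi> where "\<phi> t = (1 - h1 p) * h2 t - (1 - h2 p) * h1 t" for t
    have "continuous_on {p..1} \<phi>" unfolding \<phi>_def
      using q p by (intro continuous_intros continuous_on_subset[OF c1] continuous_on_subset[OF c2]) auto
    moreover have "\<phi> p = \<phi> 1" unfolding \<phi>_def using one1 one2 by (simp add: algebra_simps)
    moreover have Dphi: "(\<phi> has_real_derivative (1 - h1 p) * h2' z - (1 - h2 p) * h1' z) (at z)"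
      if "p < z" "z < 1" for z
      unfolding \<phi>_def using that q p by (auto intro!: derivative_eq_intros D1 D2)
    ultimately obtain z where z: "p < z" "z < 1" "(\<phi> has_real_derivative 0) (at z)"
      using Rolle[of p 1 \<phi>] p real_differentiable_def by blast
    have eq: "(1 - h1 p) * h2' z = (1 - h2 p) * h1' z"
      using DERIV_unique[OF Dphi[OF z(1,2)] z(3)] by simp
    have pos1: "0 < h1 z" "h1 z \<le> 1" using h_props[OF h1 p1] z q p by auto
    have pos2: "0 < h2 z" using h_props[OF h2 p2] z q p by auto
    have dp1: "0 < h1' z" using p1 z q p by auto
    have dp2: "0 < h2' z" using p2 z q p by auto
    have "Hfun h1 h1' z / Hfun h2 h2' z \<le> c" using G z q p by auto
    moreover have "Hfun h1 h1' z / Hfun h2 h2' z = (h1' z * h2 z) / (h1 z * h2' z)"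
      unfolding Hfun_def using z q p pos1 pos2 dp1 dp2 by (simp add: field_simps)
    ultimately have Gz: "h1' z * h2 z \<le> c * (h1 z * h2' z)"
      using pos1 pos2 dp2 by (simp add: divide_le_eq)
    have hp2: "0 \<le> 1 - h2 p" "0 \<le> 1 - h1 p" using h_props(1)[OF h2 p2, of p] h_props(1)[OF h1 p1, of p] q p by auto
    have "(1 - h1 p) * h2 z * h2' z = (1 - h2 p) * (h1' z * h2 z)"
      using arg_cong[OF eq, of "\<lambda>t. t * h2 z"] by (simp only: ac_simps)
    also have "\<dots> \<le> (1 - h2 p) * (c * (h1 z * h2' z))" using mult_left_mono[OF Gz hp2(1)] .
    also have "\<dots> \<le> (1 - h2 p) * (c * h2' z)"
      using hp2 c pos1 dp2 by (intro mult_left_mono) (auto simp: mult_le_cancel_right1 )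
    finally have "(1 - h1 p) * h2 z \<le> (1 - h2 p) * c" using dp2
      by (simp add: mult.assoc mult.commute[of c] mult_le_cancel_right)
    moreover have "h2 p \<le> h2 z" using mono_onD[OF m2, of p z] z q p by auto
    ultimately show ?thesis using mult_left_mono[OF \<open>h2 p \<le> h2 z\<close> hp2(2)]
      by (simp add: mult.commute)
  qed
  define F where "F = at (1::real) within {q<..<1}"
  have nb: "F \<noteq> bot" unfolding F_def
    using islimpt_greaterThanLessThan2[of q 1] q trivial_limit_within by blast
  have sub: "{q<..<1} \<subseteq> {0..(1::real)}" using q by auto
  have L1: "((\<lambda>y. (h1 y - h1 1) / (y - 1)) \<longlongrightarrow> h1' 1) F"
    unfolding F_def using has_field_derivative_subset[OF d1[rule_format, of 1] sub]
    by (simp add: has_field_derivative_iff)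
  have L2: "((\<lambda>y. (h2 y - h2 1) / (y - 1)) \<longlongrightarrow> h2' 1) F"
    unfolding F_def using has_field_derivative_subset[OF d2[rule_format, of 1] sub]
    by (simp add: has_field_derivative_iff)
  have L3: "(h2 \<longlongrightarrow> 1) F"
  proof -
    have "continuous (at 1 within {q<..<1}) h2"
      using DERIV_continuous[OF has_field_derivative_subset[OF d2[rule_format, of 1] sub]] by simp
    then show ?thesis unfolding F_def continuous_within using one2 by simp
  qed
  have ev: "\<forall>\<^sub>F y in F. (h1 y - h1 1) / (y - 1) * h2 y \<le> c * ((h2 y - h2 1) / (y - 1))"
    unfolding F_def eventually_at_filter
  proof (intro always_eventually allI impI)
    fix y assume y: "y \<noteq> 1" "y \<in> {q<..<1}"
    then have "(1 - h1 y) * h2 y \<le> c * (1 - h2 y)" using key by auto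
    then have "(1 - h1 y) * h2 y / (1 - y) \<le> c * (1 - h2 y) / (1 - y)" using y
      by (intro divide_right_mono) auto
    moreover have "(h1 y - h1 1) / (y - 1) = (1 - h1 y) / (1 - y)" using one1 y
      by (simp add: field_simps)
    moreover have "(h2 y - h2 1) / (y - 1) = (1 - h2 y) / (1 - y)" using one2 y
      by (simp add: field_simps)
    ultimately show "(h1 y - h1 1) / (y - 1) * h2 y \<le> c * ((h2 y - h2 1) / (y - 1))"
      by (simp add: field_simps)
  qed
  have "h1' 1 * 1 \<le> c * h2' 1"
    by (rule tendsto_le[OF nb tendsto_mult_left[OF L2] tendsto_mult[OF L1 L3] ev])
  then show ?thesis by simp
qed

lemma Hfun_pos:
  assumes h: "domination_fun h h'" and hp: "\<forall>p\<in>{0<..<1}. h' p > 0" and p: "0 < p" "p < 1"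
  shows "0 < Hfun h h' p"
  using h_props(2)[OF h hp, of p] hp p unfolding Hfun_def by auto

lemma main:
  fixes S f h1 h1' h2 h2' fT1 fT2 :: "real \<Rightarrow> real"
  assumes X: "lifetime S f"
    and f_pos: "\<forall>x>0. f x > 0"
    and h1: "domination_fun h1 h1'" and h2: "domination_fun h2 h2'"
    and h1'_pos: "\<forall>p\<in>{0<..<1}. h1' p > 0"
    and h2'_pos: "\<forall>p\<in>{0<..<1}. h2' p > 0"
    and T1: "lifetime (\<lambda>x. h1 (S x)) fT1"
    and T2: "lifetime (\<lambda>x. h2 (S x)) fT2"
  shows "c_prec (\<lambda>x. h1 (S x)) fT1 (\<lambda>x. h2 (S x)) fT2 \<longleftrightarrow>
            antimono_on {0<..<1} (\<lambda>p. Hfun h1 h1' p / Hfun h2 h2' p)"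
proof -
  define G where "G p = Hfun h1 h1' p / Hfun h2 h2' p" for p
  define R where "R x = hazard (\<lambda>x. h1 (S x)) fT1 x / hazard (\<lambda>x. h2 (S x)) fT2 x" for x
  have dec: "\<And>x y. 0 \<le> x \<Longrightarrow> x < y \<Longrightarrow> S y < S x" using X unfolding lifetime_def by auto
  have f0: "0 \<le> f 0" using X unfolding lifetime_def by auto
  have Gpos: "0 < G p" if "0 < p" "p < 1" for p
    unfolding G_def using Hfun_pos[OF h1 h1'_pos that] Hfun_pos[OF h2 h2'_pos that] by simp
  have RG: "R x = G (S x)" if x: "0 < x" for x
  proof -
    let ?p = "S x"
    have p: "0 < ?p" "?p < 1" using S_props(3,5)[OF X] x by auto
    have a1: "0 < h1 ?p" "0 < h1' ?p" using h_props(2)[OF h1 h1'_pos] h1'_pos p by auto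
    have a2: "0 < h2 ?p" "0 < h2' ?p" using h_props(2)[OF h2 h2'_pos] h2'_pos p by auto
    have fx: "0 < f x" using f_pos x by auto
    show ?thesis
      unfolding R_def G_def hazard_def Hfun_def fT_eq[OF X h1 T1 less_imp_le[OF x]] fT_eq[OF X h2 T2 less_imp_le[OF x]]
      using a1 a2 fx p by (simp add: field_simps)
  qed
  have R0: "R 0 = (h1' 1 * f 0) / (h2' 1 * f 0)"
    unfolding R_def hazard_def fT_eq[OF X h1 T1 order_refl] fT_eq[OF X h2 T2 order_refl] S_props(2)[OF X]
    using h1 h2 unfolding domination_fun_def by simp
  have cR: "c_prec (\<lambda>x. h1 (S x)) fT1 (\<lambda>x. h2 (S x)) fT2 \<longleftrightarrow> mono_on {0..} R"
    unfolding c_prec_def R_def ..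
  show ?thesis
    unfolding cR G_def[symmetric]
  proof
    assume mR: "mono_on {0..} R"
    show "antimono_on {0<..<1} G"
    proof (rule monotone_onI)
      fix p q :: real assume pq: "p \<in> {0<..<1}" "q \<in> {0<..<1}" "p \<le> q"
      obtain xp where xp: "xp > 0" "S xp = p" using S_props(6)[OF X, of p] pq by auto
      obtain xq where xq: "xq > 0" "S xq = q" using S_props(6)[OF X, of q] pq by auto
      show "G q \<le> G p"
      proof (cases "p = q")
        case True then show ?thesis by simp
      next
        case False
        then have "p < q" using pq by simp
        have "xq < xp"
        proof (rule ccontr)
          assume "\<not> xq < xp"
          then have "S xq \<le> S xp" using dec[of xp xq] xp by (cases "xp = xq") auto
          then show False using xp xq \<open>p < q\<close> by simp
        qed
        then have "R xq \<le> R xp" using mono_onD[OF mR, of xq xp] xp xq by auto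
        then show ?thesis using RG[OF xp(1)] RG[OF xq(1)] xp xq by simp
      qed
    qed
  next
    assume aG: "antimono_on {0<..<1} G"
    show "mono_on {0..} R"
    proof (rule monotone_onI)
      fix x y :: real assume xy: "x \<in> {0..}" "y \<in> {0..}" "x \<le> y"
      show "R x \<le> R y"
      proof (cases "x = y")
        case True then show ?thesis by simp
      next
        case False
        then have "x < y" using xy by simp
        then have y0: "y > 0" using xy by simp
        have Sy: "S y \<in> {0<..<1}" using S_props(3,5)[OF X] y0 by auto
        show ?thesis
        proof (cases "x = 0")
          case False
          then have x0: "x > 0" using xy by simp
          have Sx: "S x \<in> {0<..<1}" using S_props(3,5)[OF X] x0 by auto
          have "S y \<le> S x" using dec[of x y] x0 \<open>x < y\<close> by simp
          then have "G (S x) \<le> G (S y)" using monotone_onD[OF aG Sy Sx] by simp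
          then show ?thesis using RG x0 y0 by simp
        next
          case True
          define q where "q = S y"
          define c where "c = G q"
          have q: "0 < q" "q < 1" using Sy q_def by auto
          have c: "0 \<le> c" using Gpos[OF q] c_def by simp
          have "h1' 1 \<le> c * h2' 1"
          proof (rule boundary[OF h1 h2 h1'_pos h2'_pos q c])
            fix p assume "q < p" "p < 1"
            then show "Hfun h1 h1' p / Hfun h2 h2' p \<le> c"
              using monotone_onD[OF aG, of q p] q unfolding c_def G_def by auto
          qed
          moreover have "0 \<le> h2' 1" using h_props(3)[OF h2 h2'_pos] .
          ultimately have "(h1' 1 * f 0) / (h2' 1 * f 0) \<le> c"
            using f0 c by (cases "h2' 1 * f 0 = 0") (auto simp: divide_le_eq mult_less_0_iff zero_less_mult_iff)
          then show ?thesis using True R0 RG[OF y0] c_def q_def by simp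
        qed
      qed
    qed
  qed
qed

theorem proposition3p1:
  fixes S f h1 h1' h2 h2' fT1 fT2 :: "real \<Rightarrow> real"
  assumes X: "lifetime S f"
    and f_pos: "\<forall>x>0. f x > 0"
    and h1: "domination_fun h1 h1'" and h2: "domination_fun h2 h2'"
    and h1'_pos: "\<forall>p\<in>{0<..<1}. h1' p > 0"
    and h2'_pos: "\<forall>p\<in>{0<..<1}. h2' p > 0"
    and T1: "lifetime (\<lambda>x. h1 (S x)) fT1"
    and T2: "lifetime (\<lambda>x. h2 (S x)) fT2"
  shows "(c_prec (\<lambda>x. h1 (S x)) fT1 (\<lambda>x. h2 (S x)) fT2 \<longleftrightarrow>
            antimono_on {0<..<1} (\<lambda>p. Hfun h1 h1' p / Hfun h2 h2' p))
       \<and> (c_prec (\<lambda>x. h2 (S x)) fT2 (\<lambda>x. h1 (S x)) fT1 \<longleftrightarrow>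
            mono_on {0<..<1} (\<lambda>p. Hfun h1 h1' p / Hfun h2 h2' p))"
proof
  show "c_prec (\<lambda>x. h1 (S x)) fT1 (\<lambda>x. h2 (S x)) fT2 \<longleftrightarrow>
            antimono_on {0<..<1} (\<lambda>p. Hfun h1 h1' p / Hfun h2 h2' p)"
    by (rule main[OF X f_pos h1 h2 h1'_pos h2'_pos T1 T2])
  have B: "c_prec (\<lambda>x. h2 (S x)) fT2 (\<lambda>x. h1 (S x)) fT1 \<longleftrightarrow>
            antimono_on {0<..<1} (\<lambda>p. Hfun h2 h2' p / Hfun h1 h1' p)"
    by (rule main[OF X f_pos h2 h1 h2'_pos h1'_pos T2 T1])
  have C: "antimono_on {0<..<1} (\<lambda>p. Hfun h2 h2' p / Hfun h1 h1' p) \<longleftrightarrow>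
            mono_on {0<..<1} (\<lambda>p. Hfun h1 h1' p / Hfun h2 h2' p)"
  proof -
    have pw: "(Hfun h2 h2' b / Hfun h1 h1' b \<le> Hfun h2 h2' a / Hfun h1 h1' a) \<longleftrightarrow>
              (Hfun h1 h1' a / Hfun h2 h2' a \<le> Hfun h1 h1' b / Hfun h2 h2' b)"
      if "a \<in> {0<..<1}" "b \<in> {0<..<1}" for a b
    proof -
      have "0 < Hfun h1 h1' a" "0 < Hfun h2 h2' a" "0 < Hfun h1 h1' b" "0 < Hfun h2 h2' b"
        using Hfun_pos[OF h1 h1'_pos] Hfun_pos[OF h2 h2'_pos] that by auto
      then show ?thesis by (simp add: field_simps)
    qed
    show ?thesis unfolding monotone_on_def using pw by blast
  qed
  show "c_prec (\<lambda>x. h2 (S x)) fT2 (\<lambda>x. h1 (S x)) fT1 \<longleftrightarrow>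
            mono_on {0<..<1} (\<lambda>p. Hfun h1 h1' p / Hfun h2 h2' p)"
    using B C by simp
qed

end
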